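(* Let $n$ be even. Up to scaling there is a unique non-zero $\mathrm{GL}_n(\mathbb{R})$-equivariant map $(\mathbb{P}(\mathbb{R}^n))^{q}\to\mathbb{R}_\varepsilon$ for $q=n+1$, and there is no non-zero such map for $q\le n$.
   Context: $\mathbb{P}(\mathbb{R}^n)$ is real projective space with the diagonal $\mathrm{GL}_n(\mathbb{R})$-action on tuples. $\mathbb{R}_\varepsilon$ denotes $\mathbb{R}$ with $g\in\mathrm{GL}_n(\mathbb{R})$ acting by multiplication by $\varepsilon(g)=\operatorname{sign}\det g$. A map $f$ is equivariant if $f(gx_0,\dots,gx_{q-1})=\varepsilon(g)f(x_0,\dots,x_{q-1})$ for all $g$ and all tuples (arbitrary functions, no measurability required). *)

theory Defs
  imports "HOL-Analysis.Analysis"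
begin

definition proj_space :: "(real^'n) set set" where
  "proj_space = {L. subspace L \<and> dim L = 1}"

definition act_line :: "real^'n^'n \<Rightarrow> (real^'n) set \<Rightarrow> (real^'n) set" where
  "act_line g L = (\<lambda>v. g *v v) ` L"

definition proj_tuples :: "nat \<Rightarrow> (real^'n) set list set" where
  "proj_tuples q = {xs. length xs = q \<and> set xs \<subseteq> proj_space}"

definition eps :: "real^'n^'n \<Rightarrow> real" where
  "eps g = sgn (det g)"

text \<open>f : P(R^n)^q \<rightarrow> R_eps is GL_n(R)-equivariant (only values on q-tuples
  of points of P(R^n) matter).\<close>
definition equivariant :: "nat \<Rightarrow> ((real^'n) set list \<Rightarrow> real) \<Rightarrow> bool" where
  "equivariant q f \<longleftrightarrow>
     (\<forall>g::real^'n^'n. invertible g \<longrightarrow>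
        (\<forall>xs \<in> proj_tuples q. f (map (act_line g) xs) = eps g * f xs))"

definition nonzero_map :: "nat \<Rightarrow> ((real^'n) set list \<Rightarrow> real) \<Rightarrow> bool" where
  "nonzero_map q f \<longleftrightarrow> (\<exists>xs \<in> (proj_tuples q :: (real^'n) set list set). f xs \<noteq> 0)"

end

theory Submission
  imports Defs
begin



lemma refl_unit:
  fixes a w :: "real^'n"
  assumes na: "norm a = 1" and aw: "a \<bullet> w \<noteq> 0"
  shows "\<exists>g::real^'n^'n. det g = -1 \<and> (\<forall>v. g *v v = v - (2 * (a \<bullet> v) / (a \<bullet> w)) *\<^sub>R w)"
proof -
  obtain k :: 'n where True by simp
  obtain A where oA: "orthogonal_matrix A" and Ak: "A *v (axis k 1) = a"
    using orthogonal_matrix_exists_basis[OF na] by metis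
  have aA: "a $ i = A $ i $ k" for i
    unfolding Ak[symmetric] by (simp add: matrix_vector_mult_def axis_def if_distrib cong: if_cong)
  have col: "(transpose A *v v) $ k = a \<bullet> v" for v
    by (simp add: matrix_vector_mult_def transpose_def inner_vec_def aA mult.commute)
  define d where "d = - (2 / (a \<bullet> w)) *\<^sub>R (transpose A *v w)"
  define g' :: "real^'n^'n" where "g' = (\<chi> i j. if j = k then (mat 1 *v (axis k 1 + d)) $ i else (mat 1::real^'n^'n) $ i $ j)"
  have detg': "det g' = 1 + d $ k"
    unfolding g'_def by (subst cramer_lemma) (simp add: axis_def)
  have "d $ k = - (2 / (a \<bullet> w)) * (a \<bullet> w)"
    unfolding d_def by (simp only: vector_scaleR_component col real_scaleR_def)
  then have dk: "d $ k = -2" using aw by simp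
  have g'alt: "g' = mat 1 + (\<chi> i j. if j = k then d $ i else 0)"
    unfolding g'_def matrix_vector_mul_lid by (simp add: vec_eq_iff mat_def axis_def)
  have g'v: "g' *v y = y + (y $ k) *\<^sub>R d" for y
  proof -
    have "(\<chi> i j. if j = k then d $ i else 0) *v y = (y $ k) *\<^sub>R d"
    proof -
      have "(\<Sum>j\<in>UNIV. y $ j * (if j = k then c else 0)) = y $ k * c" for c
      proof -
        have "(\<Sum>j\<in>UNIV. y $ j * (if j = k then c else 0)) = (\<Sum>j\<in>UNIV. if j = k then y $ j * c else 0)"
          by (rule sum.cong) auto
        then show ?thesis by simp
      qed
      then show ?thesis by (simp add: vec_eq_iff matrix_vector_mult_def mult.commute)
    qed
    then show ?thesis by (simp add: g'alt matrix_vector_mult_add_rdistrib)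
  qed
  define g where "g = A ** g' ** transpose A"
  have AAt: "A ** transpose A = mat 1" "transpose A ** A = mat 1" using oA by (auto simp: orthogonal_matrix_def)
  have "det A * det A = 1"
    using AAt by (metis det_I det_mul det_transpose)
  then have "det g = -1" unfolding g_def using detg' dk by (simp add: det_mul)
  moreover have "g *v v = v - (2 * (a \<bullet> v) / (a \<bullet> w)) *\<^sub>R w" for v
  proof -
    have "g *v v = A *v (g' *v (transpose A *v v))" by (simp only: g_def matrix_vector_mul_assoc matrix_mul_assoc)
    also have "\<dots> = A *v (transpose A *v v) + (a \<bullet> v) *\<^sub>R (A *v d)"
      by (simp add: g'v col matrix_vector_right_distrib matrix_vector_mult_scaleR del: transpose_matrix_vector)
    also have "\<dots> = v - (2 * (a \<bullet> v) / (a \<bullet> w)) *\<^sub>R w"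
    proof -
      have AA: "A *v (transpose A *v x) = x" for x
        by (simp only: matrix_vector_mul_assoc AAt matrix_vector_mul_lid)
      have "A *v d = - (2 / (a \<bullet> w)) *\<^sub>R w"
        unfolding d_def by (simp only: matrix_vector_mult_scaleR AA)
      then show ?thesis by (simp add: AA algebra_simps del: transpose_matrix_vector)
    qed
    finally show ?thesis .
  qed
  ultimately show ?thesis by blast
qed


lemma refl_gen:
  fixes a w :: "real^'n"
  assumes aw: "a \<bullet> w \<noteq> 0"
  shows "\<exists>g::real^'n^'n. invertible g \<and> eps g = -1 \<and> (\<forall>v. g *v v = v - (2 * (a \<bullet> v) / (a \<bullet> w)) *\<^sub>R w)"
proof -
  have a0: "a \<noteq> 0" using aw by auto
  define a' where "a' = a /\<^sub>R norm a"
  have na: "norm a' = 1" using a0 by (simp add: a'_def)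
  have a'v: "a' \<bullet> v = (a \<bullet> v) / norm a" for v
    unfolding a'_def by (simp only: inner_scaleR_left divide_inverse mult.commute)
  have a'w: "a' \<bullet> w = (a \<bullet> w) / norm a" by (rule a'v)
  have "a' \<bullet> w \<noteq> 0" using aw a0 a'w by simp
  then obtain g :: "real^'n^'n" where dg: "det g = -1" and gv: "\<forall>v. g *v v = v - (2 * (a' \<bullet> v) / (a' \<bullet> w)) *\<^sub>R w"
    using refl_unit[OF na] by blast
  have "2 * (a' \<bullet> v) / (a' \<bullet> w) = 2 * (a \<bullet> v) / (a \<bullet> w)" for v
    using a0 by (simp add: a'w a'v)
  then have "\<forall>v. g *v v = v - (2 * (a \<bullet> v) / (a \<bullet> w)) *\<^sub>R w" using gv by simp
  moreover have "invertible g" using dg by (simp add: invertible_det_nz)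
  moreover have "eps g = -1" using dg by (simp add: eps_def)
  ultimately show ?thesis by blast
qed



lemma stab:
  fixes S :: "(real^'n) set" and u :: "real^'n"
  assumes "dim S < CARD('n)"
  shows "\<exists>g::real^'n^'n. invertible g \<and> eps g = -1 \<and> (\<forall>x\<in>span S. g *v x = x)
           \<and> (g *v u = u \<or> g *v u = - u)"
proof (cases "u \<in> span S")
  case True
  have "dim S < DIM(real^'n)" using assms by simp
  then obtain p :: "real^'n" where p0: "p \<noteq> 0" and po: "\<And>y. y \<in> span S \<Longrightarrow> orthogonal p y"
    using orthogonal_to_subspace_exists by blast
  have "p \<bullet> p \<noteq> 0" using p0 by simp
  then obtain g :: "real^'n^'n" where g: "invertible g" "eps g = -1"
      and gv: "\<forall>v. g *v v = v - (2 * (p \<bullet> v) / (p \<bullet> p)) *\<^sub>R p"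
    using refl_gen by blast
  have "\<forall>x\<in>span S. g *v x = x" using gv po by (simp add: orthogonal_def)
  moreover have "g *v u = u" using gv po[OF True] by (simp add: orthogonal_def)
  ultimately show ?thesis using g by blast
next
  case False
  obtain y z where y: "y \<in> span S" and zo: "\<And>w. w \<in> span S \<Longrightarrow> orthogonal z w" and u: "u = y + z"
    using orthogonal_subspace_decomp_exists by blast
  have z0: "z \<noteq> 0" using False y u by auto
  have zu: "z \<bullet> u = z \<bullet> z" using zo[OF y] u by (simp add: orthogonal_def inner_add_right)
  then have "z \<bullet> u \<noteq> 0" using z0 by simp
  then obtain g :: "real^'n^'n" where g: "invertible g" "eps g = -1"
      and gv: "\<forall>v. g *v v = v - (2 * (z \<bullet> v) / (z \<bullet> u)) *\<^sub>R u"
    using refl_gen by blast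
  have "\<forall>x\<in>span S. g *v x = x" using gv zo by (simp add: orthogonal_def)
  moreover have "g *v u = - u"
  proof -
    have h1: "2 * (z \<bullet> u) / (z \<bullet> u) = 2" using \<open>z \<bullet> u \<noteq> 0\<close> by simp
    have h2: "g *v u = u - (2 * (z \<bullet> u) / (z \<bullet> u)) *\<^sub>R u" using gv by blast
    have "g *v u = u - 2 *\<^sub>R u" using h2 unfolding h1 .
    then show ?thesis by (simp add: scaleR_2)
  qed
  ultimately show ?thesis using g by blast
qed



lemma line_ex:
  assumes "L \<in> proj_space"
  shows "\<exists>w\<in>L. w \<noteq> 0"
proof (rule ccontr)
  assume "\<not> ?thesis"
  then have "L \<subseteq> {0}" by auto
  then have d0: "dim L = 0" by (simp add: dim_eq_0)
  have "dim L = 1" using assms by (simp add: proj_space_def)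
  with d0 show False by simp
qed

lemma line_span:
  assumes "L \<in> proj_space" "w \<in> L" "w \<noteq> 0"
  shows "L = span {w}"
proof -
  have sL: "subspace L" and dL: "dim L = 1" using assms(1) by (auto simp: proj_space_def)
  have "span {w} \<subseteq> L" using assms(2) sL by (simp add: span_minimal)
  moreover have "dim (span {w}) = 1" using assms(3) by simp
  ultimately show ?thesis using subspace_dim_equal[of "span {w}" L] sL dL by (simp add: subspace_span)
qed

lemma span_line_proj: "w \<noteq> 0 \<Longrightarrow> span {w} \<in> proj_space"
  by (simp add: proj_space_def subspace_span)

lemma act_line_span: "act_line g (span S) = span ((\<lambda>v. g *v v) ` S)"
  unfolding act_line_def by (simp add: span_linear_image matrix_vector_mul_linear)

lemma span_scale_sing: 
  assumes c: "c \<noteq> 0" shows "span {c *\<^sub>R w} = span {w :: 'a::real_vector}"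
proof -
  have "c *\<^sub>R w \<in> span {w}" by (simp add: span_base span_scale)
  moreover have "w \<in> span {c *\<^sub>R w}"
  proof -
    have "(1/c) *\<^sub>R (c *\<^sub>R w) \<in> span {c *\<^sub>R w}" by (rule span_scale, rule span_base) simp
    moreover have "(1/c) *\<^sub>R (c *\<^sub>R w) = w" using c by simp
    ultimately show ?thesis by metis
  qed
  ultimately have "span {c *\<^sub>R w} \<subseteq> span {w}" "span {w} \<subseteq> span {c *\<^sub>R w}"
    by (simp_all add: span_minimal subspace_span)
  then show ?thesis by (rule subset_antisym)
qed

lemma act_line_comp: "act_line (A ** B) L = act_line A (act_line B L)"
  unfolding act_line_def image_image by (simp only: matrix_vector_mul_assoc)

lemma act_line_id: "act_line (mat 1) L = L"
  unfolding act_line_def by simp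

lemma act_line_fix:
  assumes "\<forall>x\<in>L. g *v x = x" shows "act_line g L = L"
proof -
  have "(\<lambda>v. g *v v) ` L = (\<lambda>v. v) ` L" using assms by (intro image_cong) auto
  then show ?thesis unfolding act_line_def by simp
qed



definition iota :: "nat \<Rightarrow> 'n::finite" where
  "iota = (SOME h. bij_betw h {0..<CARD('n)} UNIV)"

lemma bij_iota: "bij_betw (iota :: nat \<Rightarrow> 'n::finite) {0..<CARD('n)} UNIV"
proof -
  have "\<exists>h. bij_betw (h::nat \<Rightarrow> 'n) {0..<CARD('n)} UNIV"
    using ex_bij_betw_nat_finite[of "UNIV :: 'n set"] by simp
  then show ?thesis unfolding iota_def by (rule someI_ex)
qed

definition idx :: "'n::finite \<Rightarrow> nat" where
  "idx c = inv_into {0..<CARD('n)} iota c"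

lemma idx_lt: "idx (c::'n::finite) < CARD('n)"
  using inv_into_into[of c iota "{0..<CARD('n)}"] bij_iota[where 'n='n]
  unfolding idx_def bij_betw_def by auto

lemma iota_idx [simp]: "iota (idx c) = c"
  unfolding idx_def by (rule bij_betw_inv_into_right[OF bij_iota]) simp

lemma idx_iota [simp]: "k < CARD('n::finite) \<Longrightarrow> idx (iota k :: 'n) = k"
  unfolding idx_def by (rule bij_betw_inv_into_left[OF bij_iota]) simp

definition frame :: "(real^'n::finite) set list" where
  "frame = span {vec 1} # map (\<lambda>k. span {axis (iota k) 1}) [0..<CARD('n)]"

lemma length_frame [simp]: "length (frame :: (real^'n::finite) set list) = CARD('n) + 1"
  by (simp add: frame_def)

lemma frame_in: "(frame :: (real^'n::finite) set list) \<in> proj_tuples (CARD('n) + 1)"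
proof -
  have "vec 1 \<noteq> (0::real^'n)" by (simp add: vec_eq_iff)
  moreover have "axis c 1 \<noteq> (0::real^'n)" for c by (simp add: axis_eq_0_iff)
  ultimately show ?thesis
    by (auto simp: proj_tuples_def frame_def intro!: span_line_proj)
qed

definition degen :: "(real^'n::finite) set list \<Rightarrow> bool" where
  "degen xs \<longleftrightarrow> (\<exists>j<length xs. dim (\<Union>k\<in>{k. k < length xs \<and> k \<noteq> j}. xs!k) < CARD('n))"

lemma deg_zero:
  fixes f :: "(real^'n::finite) set list \<Rightarrow> real"
  assumes eq: "equivariant q f" and xs: "xs \<in> proj_tuples q" and dg: "degen xs"
  shows "f xs = 0"
proof -
  obtain j where j: "j < length xs" and dj: "dim (\<Union>k\<in>{k. k < length xs \<and> k \<noteq> j}. xs!k) < CARD('n)"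
    using dg unfolding degen_def by blast
  define S where "S = (\<Union>k\<in>{k. k < length xs \<and> k \<noteq> j}. xs!k)"
  have lines: "xs ! k \<in> proj_space" if "k < length xs" for k
    using xs that unfolding proj_tuples_def by (auto dest: nth_mem)
  obtain u where u: "u \<in> xs!j" "u \<noteq> 0" using line_ex[OF lines[OF j]] by blast
  have xj: "xs!j = span {u}" using line_span[OF lines[OF j] u] .
  obtain g :: "real^'n^'n" where g: "invertible g" "eps g = -1" and gS: "\<forall>x\<in>span S. g *v x = x"
      and gu: "g *v u = u \<or> g *v u = - u"
    using stab[of S u] dj unfolding S_def by blast
  have "map (act_line g) xs = xs"
  proof (rule nth_equalityI)
    show "length (map (act_line g) xs) = length xs" by simp
    fix k assume k: "k < length (map (act_line g) xs)"
    show "map (act_line g) xs ! k = xs ! k"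
    proof (cases "k = j")
      case True
      have "act_line g (xs!j) = span {g *v u}" by (simp add: xj act_line_span)
      also have "\<dots> = xs!j"
        using gu xj span_scale_sing[of "-1" u] by auto
      finally show ?thesis using True j by simp
    next
      case False
      have "xs!k \<subseteq> S" using False k unfolding S_def by auto
      then have "\<forall>x\<in>xs!k. g *v x = x" using gS span_superset by blast
      then show ?thesis using k by (simp add: act_line_fix)
    qed
  qed
  then have "f xs = eps g * f xs" using eq g(1) xs unfolding equivariant_def by metis
  then show ?thesis using g(2) by simp
qed

lemma empty_zero:
  fixes f :: "(real^'n::finite) set list \<Rightarrow> real"
  assumes eq: "equivariant 0 f"
  shows "f [] = 0"
proof -
  obtain g :: "real^'n^'n" where g: "invertible g" "eps g = -1"
    using stab[of "{}" 0] by auto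
  have "[] \<in> (proj_tuples 0 :: (real^'n) set list set)" by (simp add: proj_tuples_def)
  then have "f [] = eps g * f []" using eq g(1) unfolding equivariant_def by fastforce
  then show ?thesis using g(2) by simp
qed

lemma small_zero:
  fixes f :: "(real^'n::finite) set list \<Rightarrow> real"
  assumes q: "q \<le> CARD('n)" and eq: "equivariant q f" and xs: "xs \<in> proj_tuples q"
  shows "f xs = 0"
proof (cases "q = 0")
  case True
  then have "xs = []" using xs by (simp add: proj_tuples_def)
  then show ?thesis using empty_zero eq True by simp
next
  case False
  have len: "length xs = q" using xs by (simp add: proj_tuples_def)
  have lines: "xs ! k \<in> proj_space" if "k < length xs" for k
    using xs that unfolding proj_tuples_def by (auto dest: nth_mem)
  define K where "K = {k. k < q \<and> k \<noteq> 0}"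
  define r where "r k = (SOME w. w \<in> xs!k \<and> w \<noteq> 0)" for k
  have r: "r k \<in> xs!k \<and> r k \<noteq> 0" if "k < q" for k
    unfolding r_def using line_ex[OF lines] that len by (metis (mono_tags, lifting) someI_ex)
  have sub: "(\<Union>k\<in>K. xs!k) \<subseteq> span (r ` K)"
  proof
    fix x assume "x \<in> (\<Union>k\<in>K. xs!k)"
    then obtain k where k: "k \<in> K" "x \<in> xs!k" by blast
    then have "xs!k = span {r k}" using line_span[OF lines] r len K_def by auto
    also have "\<dots> \<subseteq> span (r ` K)" using k(1) by (intro span_mono) auto
    finally show "x \<in> span (r ` K)" using k by blast
  qed
  have "dim (\<Union>k\<in>K. xs!k) \<le> card (r ` K)"
    by (rule dim_le_card[OF sub]) (simp add: K_def)
  also have "\<dots> \<le> card K" by (rule card_image_le) (simp add: K_def)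
  also have "card K = q - 1"
  proof -
    have "K = {1..<q}" unfolding K_def by auto
    then show ?thesis by simp
  qed
  finally have "dim (\<Union>k\<in>K. xs!k) < CARD('n)" using q False by linarith
  then have "degen xs" unfolding degen_def using len False K_def by (intro exI[of _ 0]) auto
  then show ?thesis using deg_zero eq xs by blast
qed



lemma mult_axis_comp: "((h::real^'n^'n) *v axis c 1) $ d = h $ d $ c"
  by (simp add: matrix_vector_mult_basis column_def)

lemma diag_mult: "(\<chi> i j. if i = j then a$i else 0) *v x = (\<chi> i. a$i * x$i :: real^'n)"
proof -
  have "(\<Sum>j\<in>UNIV. (if i = j then a$i else 0) * x$j) = a$i * x$i" for i
  proof -
    have "(\<Sum>j\<in>UNIV. (if i = j then a$i else 0) * x$j) = (\<Sum>j\<in>UNIV. if j = i then a$i * x$j else 0)"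
      by (rule sum.cong) auto
    then show ?thesis by simp
  qed
  then show ?thesis by (simp add: vec_eq_iff matrix_vector_mult_def)
qed

lemma det_diag: "det (\<chi> i j. if i = j then a$i else 0 :: real^'n^'n) = (\<Prod>i\<in>UNIV. a$i)"
  by (subst det_diagonal) auto

lemma frame_nth0: "(frame :: (real^'n::finite) set list) ! 0 = span {vec 1}"
  by (simp add: frame_def)

lemma frame_nthS: "k < CARD('n::finite) \<Longrightarrow> (frame :: (real^'n) set list) ! Suc k = span {axis (iota k) 1}"
  by (simp add: frame_def)

lemma frame_stab:
  fixes h :: "real^'n::finite^'n"
  assumes ev: "even CARD('n)" and inv: "invertible h" and st: "map (act_line h) frame = frame"
  shows "det h > 0"
proof -
  have st': "act_line h (frame ! k) = frame ! k" if "k < CARD('n) + 1" for k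
    using st that by (metis length_frame nth_map)
  have ex: "\<exists>l. h *v axis c 1 = l *\<^sub>R axis c 1" for c
  proof -
    have "act_line h (span {axis c 1}) = span {axis c 1}"
      using st'[of "Suc (idx c)"] idx_lt[of c] frame_nthS[where 'n='n, of "idx c"] by simp
    moreover have "h *v axis c 1 \<in> act_line h (span {axis c 1})"
      unfolding act_line_def by (intro imageI span_base) simp
    ultimately have "h *v axis c 1 \<in> span {axis c 1}" by simp
    then show ?thesis by (auto simp: span_singleton)
  qed
  have offd: "h $ d $ c = 0" if "d \<noteq> c" for c d
  proof -
    obtain l where l: "h *v axis c 1 = l *\<^sub>R axis c 1" using ex by blast
    have "h $ d $ c = (h *v axis c 1) $ d" by (simp only: mult_axis_comp)
    also have "\<dots> = 0" using that by (simp only: l) (simp add: axis_def)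
    finally show ?thesis .
  qed
  have "act_line h (span {vec 1}) = span {vec 1}"
    using st'[of 0] frame_nth0[where 'n='n] by simp
  moreover have "h *v vec 1 \<in> act_line h (span {vec 1})"
    unfolding act_line_def by (intro imageI span_base) simp
  ultimately have "h *v vec 1 \<in> span {vec 1}" by simp
  then obtain m where m: "h *v vec 1 = m *\<^sub>R vec 1" by (auto simp: span_singleton)
  have diag: "h $ d $ d = m" for d
  proof -
    have "(h *v vec 1) $ d = (\<Sum>j\<in>UNIV. h $ d $ j)" by (simp add: matrix_vector_mult_def)
    also have "\<dots> = (\<Sum>j\<in>UNIV. if j = d then h $ d $ d else 0)"
      by (rule sum.cong) (auto simp: offd)
    also have "\<dots> = h $ d $ d" by simp
    finally show ?thesis using m by simp
  qed
  have dh: "det h = m ^ CARD('n)"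
    by (subst det_diagonal) (auto simp: offd diag)
  have "det h \<noteq> 0" using inv by (simp add: invertible_det_nz)
  then have "m \<noteq> 0" using dh by auto
  then show ?thesis using dh ev by (simp add: zero_less_power_eq)
qed

lemma eps_mult: "eps (A ** B) = eps A * eps B"
  by (simp add: eps_def det_mul sgn_mult)

lemma eps_inv_nz: "invertible g \<Longrightarrow> eps g \<noteq> 0"
  by (simp add: eps_def invertible_det_nz sgn_0_0)

lemma well_def:
  fixes g1 g2 :: "real^'n::finite^'n"
  assumes ev: "even CARD('n)" and i1: "invertible g1" and i2: "invertible g2"
    and eq: "map (act_line g1) frame = map (act_line g2) frame"
  shows "eps g1 = eps g2"
proof -
  obtain g1' where a: "g1 ** g1' = mat 1" and b: "g1' ** g1 = mat 1" using i1 unfolding invertible_def by blast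
  have i1': "invertible g1'" using a b unfolding invertible_def by blast
  define h where "h = g1' ** g2"
  have "map (act_line h) frame = frame"
  proof (rule map_idI)
    fix L assume L: "L \<in> set (frame :: (real^'n) set list)"
    have "act_line g2 L = act_line g1 L" using eq L by (simp add: map_eq_conv)
    then have "act_line h L = act_line g1' (act_line g1 L)" by (simp add: h_def act_line_comp)
    also have "\<dots> = L" by (simp add: act_line_comp[symmetric] b act_line_id)
    finally show "act_line h L = L" .
  qed
  then have "det h > 0" using frame_stab[OF ev] invertible_mult[OF i1' i2] h_def by blast
  have "g1 ** h = (g1 ** g1') ** g2" by (simp add: h_def matrix_mul_assoc)
  then have "g1 ** h = g2" by (simp add: a)
  then have "eps g2 = eps g1 * eps h" by (metis eps_mult)
  moreover have "eps h = 1" using \<open>det h > 0\<close> by (simp add: eps_def)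
  ultimately show ?thesis by simp
qed



lemma orbit:
  fixes xs :: "(real^'n::finite) set list"
  assumes xs: "xs \<in> proj_tuples (CARD('n)+1)" and nd: "\<not> degen xs"
  shows "\<exists>g. invertible g \<and> map (act_line g) frame = xs"
proof -
  let ?n = "CARD('n)"
  have len: "length xs = ?n + 1" using xs by (simp add: proj_tuples_def)
  have lines: "xs ! k \<in> proj_space" if "k < ?n + 1" for k
    using xs that len unfolding proj_tuples_def by (auto dest: nth_mem)
  define r where "r k = (SOME w. w \<in> xs!k \<and> w \<noteq> 0)" for k
  have r: "r k \<in> xs!k \<and> r k \<noteq> 0" if "k < ?n + 1" for k
    unfolding r_def using line_ex[OF lines[OF that]] by (metis (mono_tags, lifting) someI_ex)
  have xsr: "xs!k = span {r k}" if "k < ?n + 1" for k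
    using line_span[OF lines[OF that]] r[OF that] by blast
  define w where "w k = r (Suc k)" for k
  have nd': "?n \<le> dim (\<Union>k\<in>{k. k < ?n + 1 \<and> k \<noteq> j}. xs!k)" if "j < ?n + 1" for j
  proof -
    have "\<not> (dim (\<Union>k\<in>{k. k < length xs \<and> k \<noteq> j}. xs!k) < ?n)"
      using nd that len unfolding degen_def by auto
    then show ?thesis using len by simp
  qed
  have sub0: "(\<Union>k\<in>{k. k < ?n + 1 \<and> k \<noteq> 0}. xs!k) \<subseteq> span (w ` {0..<?n})"
  proof (rule UN_least)
    fix k assume k: "k \<in> {k. k < ?n + 1 \<and> k \<noteq> 0}"
    then obtain m where m: "k = Suc m" "m < ?n" by (cases k) auto
    have "xs!k = span {w m}" using xsr[of k] k m by (simp add: w_def)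
    also have "\<dots> \<subseteq> span (w ` {0..<?n})" using m by (intro span_mono) auto
    finally show "xs!k \<subseteq> span (w ` {0..<?n})" .
  qed
  have "?n \<le> dim (span (w ` {0..<?n}))"
    using nd'[of 0] dim_subset[OF sub0] by linarith
  then have "dim (w ` {0..<?n}) = DIM(real^'n)"
    using dim_subset_UNIV[of "w ` {0..<?n}"] by simp
  then have spanW: "span (w ` {0..<?n}) = UNIV" using dim_eq_full[of "w ` {0..<?n}"] by simp
  define B :: "real^'n^'n" where "B = (\<chi> i c. w (idx c) $ i)"
  have Bax: "B *v axis c 1 = w (idx c)" for c
    by (simp add: matrix_vector_mult_basis column_def B_def vec_eq_iff)
  have "surj (\<lambda>x. B *v x)"
  proof -
    have "subspace (range (\<lambda>x. B *v x))"
      by (rule linear_subspace_image[OF matrix_vector_mul_linear subspace_UNIV])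
    moreover have "w ` {0..<?n} \<subseteq> range (\<lambda>x. B *v x)"
    proof
      fix v assume "v \<in> w ` {0..<?n}"
      then obtain k where k: "k < ?n" "v = w k" by auto
      then have "v = B *v axis (iota k) 1" by (simp add: Bax)
      then show "v \<in> range (\<lambda>x. B *v x)" by blast
    qed
    ultimately have "span (w ` {0..<?n}) \<subseteq> range (\<lambda>x. B *v x)" by (rule span_minimal[rotated])
    then show ?thesis using spanW by auto
  qed
  then obtain B' where BB': "B ** B' = mat 1" using matrix_right_invertible_surjective by blast
  then have invB: "invertible B" using invertible_right_inverse by blast
  define a where "a = B' *v r 0"
  have Ba: "B *v a = r 0" by (simp add: a_def matrix_vector_mul_assoc BB')
  have Bsum: "B *v x = (\<Sum>c\<in>UNIV. x$c *\<^sub>R w (idx c))" for x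
    by (simp add: matrix_mult_sum scalar_mult_eq_scaleR column_def B_def)
  have anz: "a $ c \<noteq> 0" for c
  proof
    assume a0: "a $ c = 0"
    define m where "m = idx c"
    have m: "m < ?n" using idx_lt m_def by auto
    define T where "T = w ` ({0..<?n} - {m})"
    have "r 0 \<in> span T"
    proof -
      have "(\<Sum>c'\<in>UNIV. a$c' *\<^sub>R w (idx c')) \<in> span T"
      proof (rule span_sum)
        fix c' :: 'n
        show "a$c' *\<^sub>R w (idx c') \<in> span T"
        proof (cases "c' = c")
          case True then show ?thesis using a0 by (simp add: span_zero)
        next
          case False
          have "idx c' \<noteq> m" using False unfolding m_def by (metis iota_idx)
          then have "w (idx c') \<in> T" unfolding T_def using idx_lt[of c'] by auto
          then show ?thesis by (intro span_scale span_base)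
        qed
      qed
      then show ?thesis using Ba Bsum by metis
    qed
    have subT: "(\<Union>k\<in>{k. k < ?n + 1 \<and> k \<noteq> Suc m}. xs!k) \<subseteq> span T"
    proof (rule UN_least)
      fix k assume k: "k \<in> {k. k < ?n + 1 \<and> k \<noteq> Suc m}"
      show "xs!k \<subseteq> span T"
      proof (cases k)
        case 0
        then have "xs!k = span {r 0}" using xsr by simp
        also have "\<dots> \<subseteq> span T" using \<open>r 0 \<in> span T\<close> by (simp add: span_minimal subspace_span)
        finally show ?thesis .
      next
        case (Suc k')
        then have "xs!k = span {w k'}" using xsr k by (simp add: w_def)
        also have "\<dots> \<subseteq> span T" using k Suc unfolding T_def by (intro span_mono) auto
        finally show ?thesis .
      qed
    qed
    have "dim (\<Union>k\<in>{k. k < ?n + 1 \<and> k \<noteq> Suc m}. xs!k) \<le> card T"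
      by (rule dim_le_card[OF subT]) (simp add: T_def)
    also have "\<dots> \<le> card ({0..<?n} - {m})" unfolding T_def by (rule card_image_le) simp
    also have "\<dots> = ?n - 1" using m by simp
    finally show False using nd'[of "Suc m"] m by linarith
  qed
  define D :: "real^'n^'n" where "D = (\<chi> i j. if i = j then a$i else 0)"
  define g where "g = B ** D"
  have "det D \<noteq> 0" unfolding D_def det_diag using anz by simp
  then have invD: "invertible D" by (simp add: invertible_det_nz)
  have invg: "invertible g" unfolding g_def using invB invD by (rule invertible_mult)
  have g1: "g *v vec 1 = r 0"
  proof -
    have "D *v vec 1 = a" unfolding D_def diag_mult by (simp add: vec_eq_iff)
    then show ?thesis by (simp add: g_def matrix_vector_mul_assoc[symmetric] Ba)
  qed
  have g2: "g *v axis c 1 = a$c *\<^sub>R w (idx c)" for c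
  proof -
    have "D *v axis c 1 = a$c *\<^sub>R axis c 1" unfolding D_def diag_mult by (simp add: vec_eq_iff axis_def)
    then show ?thesis by (simp add: g_def matrix_vector_mul_assoc[symmetric] matrix_vector_mult_scaleR Bax)
  qed
  have "map (act_line g) frame = xs"
  proof (rule nth_equalityI)
    show "length (map (act_line g) frame) = length xs" using len by simp
    fix k assume "k < length (map (act_line g) frame)"
    then have k: "k < ?n + 1" by simp
    show "map (act_line g) frame ! k = xs ! k"
    proof (cases k)
      case 0
      have "map (act_line g) frame ! k = act_line g (span {vec 1})" using 0 by (simp add: frame_def)
      also have "\<dots> = span {r 0}" by (simp only: act_line_span image_insert image_empty g1)
      also have "\<dots> = xs ! k" using xsr 0 by simp
      finally show ?thesis .
    next
      case (Suc k')
      then have k': "k' < ?n" using k by simp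
      have "map (act_line g) frame ! k = act_line g (span {axis (iota k') 1})"
        using Suc k' by (simp add: frame_def)
      also have "\<dots> = span {a $ (iota k') *\<^sub>R w k'}" using k' by (simp add: act_line_span g2)
      also have "\<dots> = span {w k'}" by (rule span_scale_sing) (rule anz)
      also have "\<dots> = xs ! k" using xsr k Suc by (simp add: w_def)
      finally show ?thesis .
    qed
  qed
  then show ?thesis using invg by blast
qed



definition orb :: "(real^'n::finite) set list \<Rightarrow> bool" where
  "orb xs \<longleftrightarrow> (\<exists>g::real^'n^'n. invertible g \<and> map (act_line g) frame = xs)"

definition F :: "(real^'n::finite) set list \<Rightarrow> real" where
  "F xs = (if orb xs then eps (SOME g::real^'n^'n. invertible g \<and> map (act_line g) frame = xs) else 0)"

lemma F_orb:
  fixes g0 :: "real^'n::finite^'n"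
  assumes ev: "even CARD('n)" and i0: "invertible g0" and xs: "map (act_line g0) frame = xs"
  shows "F xs = eps g0"
proof -
  have o: "orb xs" using i0 xs unfolding orb_def by blast
  let ?g = "SOME g::real^'n^'n. invertible g \<and> map (act_line g) frame = xs"
  have "invertible ?g \<and> map (act_line ?g) frame = xs"
    using o unfolding orb_def by (rule someI_ex)
  then have "invertible ?g" "map (act_line ?g) frame = map (act_line g0) frame" using xs by auto
  then have "eps ?g = eps g0" by (rule well_def[OF ev _ i0])
  then show ?thesis using o by (simp add: F_def)
qed

lemma map_act_comp: "map (act_line g) (map (act_line h) xs) = map (act_line (g ** h)) xs"
  by (simp add: act_line_comp)

lemma orb_act:
  fixes g :: "real^'n::finite^'n"
  assumes ig: "invertible g" and o: "orb (map (act_line g) xs)"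
  shows "orb xs"
proof -
  obtain g' where a: "g ** g' = mat 1" and b: "g' ** g = mat 1" using ig unfolding invertible_def by blast
  have ig': "invertible g'" using a b unfolding invertible_def by blast
  obtain h :: "real^'n^'n" where ih: "invertible h" and hx: "map (act_line h) frame = map (act_line g) xs"
    using o unfolding orb_def by blast
  have "map (act_line (g' ** h)) frame = map (act_line g') (map (act_line g) xs)"
    by (simp add: map_act_comp[symmetric] hx)
  also have "\<dots> = xs" unfolding map_act_comp b by (rule map_idI) (rule act_line_id)
  finally show ?thesis unfolding orb_def using invertible_mult[OF ig' ih] by blast
qed

lemma F_equiv:
  assumes ev: "even CARD('n::finite)"
  shows "equivariant (CARD('n) + 1) (F :: (real^'n) set list \<Rightarrow> real)"
  unfolding equivariant_def
proof (intro allI impI ballI)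
  fix g :: "real^'n^'n" and xs :: "(real^'n) set list" assume ig: "invertible g" and xs: "xs \<in> proj_tuples (CARD('n) + 1)"
  show "F (map (act_line g) xs) = eps g * F xs"
  proof (cases "orb xs")
    case True
    then obtain g0 :: "real^'n^'n" where i0: "invertible g0" and x0: "map (act_line g0) frame = xs"
      unfolding orb_def by blast
    have "map (act_line (g ** g0)) frame = map (act_line g) xs"
      by (simp add: map_act_comp[symmetric] x0)
    then have "F (map (act_line g) xs) = eps (g ** g0)"
      using F_orb[OF ev invertible_mult[OF ig i0]] by blast
    also have "\<dots> = eps g * F xs" using F_orb[OF ev i0 x0] by (simp add: eps_mult)
    finally show ?thesis .
  next
    case False
    then have "\<not> orb (map (act_line g) xs)" using orb_act[OF ig] by blast
    then show ?thesis using False by (simp add: F_def)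
  qed
qed

lemma not_orb_zero:
  fixes h :: "(real^'n::finite) set list \<Rightarrow> real"
  assumes eq: "equivariant (CARD('n) + 1) h" and xs: "xs \<in> proj_tuples (CARD('n) + 1)" and no: "\<not> orb xs"
  shows "h xs = 0"
proof -
  have "degen xs" using orbit[OF xs] no unfolding orb_def by blast
  then show ?thesis using deg_zero[OF eq xs] by blast
qed

lemma orb_val:
  fixes h :: "(real^'n::finite) set list \<Rightarrow> real"
  assumes eq: "equivariant (CARD('n) + 1) h" and i0: "invertible g0" and x0: "map (act_line g0) frame = xs"
  shows "h xs = eps g0 * h frame"
proof -
  have "h (map (act_line g0) frame) = eps g0 * h frame"
    using eq i0 frame_in unfolding equivariant_def by blast
  then show ?thesis using x0 by simp
qed

theorem proposition3p1:
  assumes "even CARD('n::finite)"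
  shows "(\<exists>f :: (real^'n) set list \<Rightarrow> real.
            equivariant (CARD('n) + 1) f \<and> nonzero_map (CARD('n) + 1) f)
       \<and> (\<forall>f h :: (real^'n) set list \<Rightarrow> real.
            equivariant (CARD('n) + 1) f \<and> nonzero_map (CARD('n) + 1) f
            \<and> equivariant (CARD('n) + 1) h
            \<longrightarrow> (\<exists>c::real. \<forall>xs \<in> proj_tuples (CARD('n) + 1). h xs = c * f xs))
       \<and> (\<forall>q \<le> CARD('n). \<forall>f :: (real^'n) set list \<Rightarrow> real.
            equivariant q f \<longrightarrow> \<not> nonzero_map q f)"
proof (intro conjI allI impI)
  have "invertible (mat 1 :: real^'n^'n)" unfolding invertible_def by auto
  moreover have "map (act_line (mat 1 :: real^'n^'n)) frame = frame" by (rule map_idI) (rule act_line_id)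
  ultimately have "F (frame :: (real^'n) set list) = eps (mat 1 :: real^'n^'n)"
    by (rule F_orb[OF assms])
  then have "F (frame :: (real^'n) set list) \<noteq> 0" by (simp add: eps_def)
  then have "nonzero_map (CARD('n) + 1) (F :: (real^'n) set list \<Rightarrow> real)"
    unfolding nonzero_map_def using frame_in by blast
  then show "\<exists>f :: (real^'n) set list \<Rightarrow> real.
            equivariant (CARD('n) + 1) f \<and> nonzero_map (CARD('n) + 1) f"
    using F_equiv[OF assms] by blast
next
  fix f h :: "(real^'n) set list \<Rightarrow> real"
  assume H: "equivariant (CARD('n) + 1) f \<and> nonzero_map (CARD('n) + 1) f \<and> equivariant (CARD('n) + 1) h"
  then have ef: "equivariant (CARD('n) + 1) f" and eh: "equivariant (CARD('n) + 1) h" by auto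
  obtain xs0 where xs0: "xs0 \<in> proj_tuples (CARD('n) + 1)" and fx0: "f xs0 \<noteq> 0"
    using H unfolding nonzero_map_def by blast
  have "orb xs0" using not_orb_zero[OF ef xs0] fx0 by blast
  then obtain g0 :: "real^'n^'n" where i0: "invertible g0" and x0: "map (act_line g0) frame = xs0"
    unfolding orb_def by blast
  have ffr: "f frame \<noteq> 0" using orb_val[OF ef i0 x0] fx0 by auto
  show "\<exists>c::real. \<forall>xs \<in> proj_tuples (CARD('n) + 1). h xs = c * f xs"
  proof (intro exI ballI)
    fix xs :: "(real^'n) set list" assume xs: "xs \<in> proj_tuples (CARD('n) + 1)"
    show "h xs = (h frame / f frame) * f xs"
    proof (cases "orb xs")
      case True
      then obtain g :: "real^'n^'n" where ig: "invertible g" and xg: "map (act_line g) frame = xs"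
        unfolding orb_def by blast
      show ?thesis using orb_val[OF ef ig xg] orb_val[OF eh ig xg] ffr by simp
    next
      case False
      then show ?thesis using not_orb_zero[OF ef xs] not_orb_zero[OF eh xs] by simp
    qed
  qed
next
  fix q f
  assume q: "q \<le> CARD('n)" and eq: "equivariant q (f :: (real^'n) set list \<Rightarrow> real)"
  show "\<not> nonzero_map q f"
    unfolding nonzero_map_def using small_zero[OF q eq] by blast
qed

end
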